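(* The isoperimetric constant of Thompson's group $F$ with respect to the generating set $\{x_0,x_1\}$ satisfies $\iota(F,\{x_0,x_1\})\le 1/2$.
   Context: Thompson's group $F=\langle x_0,x_1,x_2,\dots\mid x_nx_k=x_kx_{n+1}\text{ for }k<n\rangle$, generated by $x_0,x_1$. For a group $G$ with finite generating set $\Sigma$ and Cayley graph $\Gamma$ (vertices $G$, an edge between $g$ and $sg$ for each $g\in G$, $s\in\Sigma$), and $S\subset G$, let $\delta S$ be the set of edges of $\Gamma$ joining a vertex of $S$ to a vertex of $G\setminus S$. The isoperimetric constant is $\iota(G,\Sigma)=\inf\{|\delta S|/|S| : S\subset G,\ 0<|S|<\infty\}$. *)

theory Defs
  imports "HOL-Algebra.Algebra" "HOL-Library.FuncSet"
begin

text \<open>Cayley graph of a group G w.r.t. a finite generating set Gens: vertices are the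
  elements of G, and for each g in G and s in Gens there is one edge joining g and s g.
  Edges are therefore indexed by pairs (g, s).\<close>

definition edge_boundary :: "('a, 'b) monoid_scheme \<Rightarrow> 'a set \<Rightarrow> 'a set \<Rightarrow> ('a \<times> 'a) set" where
  "edge_boundary G Gens S =
     {(g, s). g \<in> carrier G \<and> s \<in> Gens \<and> ((g \<in> S) \<noteq> (s \<otimes>\<^bsub>G\<^esub> g \<in> S))}"

definition isoperimetric_constant :: "('a, 'b) monoid_scheme \<Rightarrow> 'a set \<Rightarrow> real" where
  "isoperimetric_constant G Gens =
     Inf {real (card (edge_boundary G Gens S)) / real (card S) | S.
            S \<subseteq> carrier G \<and> finite S \<and> S \<noteq> {}}"

text \<open>Standard piecewise-linear model (Cannon--Floyd--Parry): F is the group of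
  homeomorphisms of [0,1] generated by the two maps below (under composition),
  which is isomorphic to the group given by the infinite presentation, with
  generators corresponding to generators.\<close>

definition x0 :: "real \<Rightarrow> real" where
  "x0 = (\<lambda>t \<in> {0..1}.
           if t \<le> 1/2 then t / 2
           else if t \<le> 3/4 then t - 1/4
           else 2 * t - 1)"

definition x1 :: "real \<Rightarrow> real" where
  "x1 = (\<lambda>t \<in> {0..1}.
           if t \<le> 1/2 then t
           else if t \<le> 3/4 then t / 2 + 1/4
           else if t \<le> 7/8 then t - 1/8
           else 2 * t - 1)"

definition Thompson_F :: "(real \<Rightarrow> real) monoid" where
  "Thompson_F = (BijGroup {0..1}) \<lparr> carrier := generate (BijGroup {0..1}) {x0, x1} \<rparr>"

end

theory Submission
  imports Defs
begin

abbreviation "BB \<equiv> BijGroup {0..1::real}"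

lemma BB_carrier: "carrier BB = Bij {0..1}" by (simp add: BijGroup_def)
lemma BB_mult: "f \<in> Bij {0..1} \<Longrightarrow> g \<in> Bij {0..1} \<Longrightarrow> f \<otimes>\<^bsub>BB\<^esub> g = compose {0..1} f g"
  by (simp add: BijGroup_def)
lemma BB_one: "\<one>\<^bsub>BB\<^esub> = (\<lambda>x\<in>{0..1::real}. x)" by (simp add: BijGroup_def)

lemma Bij_witness:
  assumes "f \<in> extensional S" "\<And>x. x\<in>S \<Longrightarrow> f x \<in> S" "\<And>x. x\<in>S \<Longrightarrow> g x \<in> S"
    "\<And>x. x\<in>S \<Longrightarrow> g (f x) = x" "\<And>x. x\<in>S \<Longrightarrow> f (g x) = x"
  shows "f \<in> Bij S"
  unfolding Bij_def using assms by (auto intro!: bij_betw_byWitness[of S g f S])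

lemma Bij_range: "f \<in> Bij {0..1::real} \<Longrightarrow> x \<in> {0..1} \<Longrightarrow> f x \<in> {0..1}"
  using Bij_imp_funcset by blast

definition y0 :: "real \<Rightarrow> real" where
  "y0 = (\<lambda>t \<in> {0..1}. if t \<le> 1/4 then 2*t else if t \<le> 1/2 then t + 1/4 else (t+1)/2)"

lemma half_arith[simp]: "2 * ((1 + a) / 2) - 1 = (a::real)" "(2 + 2 * a) / 2 - 1 = (a::real)"
  "(2 * x + 2) / 2 - 1 = (x::real)"
  by (auto simp: field_simps)

lemma x0_Bij: "x0 \<in> Bij {0..1}"
  apply (rule Bij_witness[where g=y0])
  by (auto simp: x0_def y0_def field_simps)

definition sig :: "(real \<Rightarrow> real) \<Rightarrow> real \<Rightarrow> real" where
  "sig g = (\<lambda>t\<in>{0..1}. if t < 1/2 then t else (1 + g (2*t - 1))/2)"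

lemma sig_Bij: assumes g: "g \<in> Bij {0..1}" shows "sig g \<in> Bij {0..1}"
proof -
  define gi where "gi = (\<lambda>x \<in> {0..1::real}. (inv_into {0..1} g) x)"
  have gi: "gi \<in> Bij {0..1}" unfolding gi_def by (rule restrict_inv_into_Bij[OF g])
  have bg: "bij_betw g {0..1} {0..1}" using g by (simp add: Bij_def)
  have l1: "gi (g x) = x" if "x \<in> {0..1}" for x
    using that bg unfolding gi_def by (auto simp: bij_betw_def inv_into_f_f)
  have l2: "g (gi x) = x" if "x \<in> {0..1}" for x
    using that bg unfolding gi_def by (auto simp: bij_betw_def f_inv_into_f)
  have r1: "g x \<in> {0..1}" if "x \<in> {0..1}" for x using Bij_range[OF g that] .
  have r2: "gi x \<in> {0..1}" if "x \<in> {0..1}" for x using Bij_range[OF gi that] .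
  show ?thesis
  proof (rule Bij_witness[where g="sig gi"])
    show "sig g \<in> extensional {0..1}" by (simp add: sig_def)
    fix x :: real assume x: "x \<in> {0..1}"
    have a: "2*x - 1 \<in> {0..1}" if "\<not> x < 1/2" using x that by auto
    show "sig g x \<in> {0..1}" using x r1[OF a] by (auto simp: sig_def)
    show "sig gi x \<in> {0..1}" using x r2[OF a] by (auto simp: sig_def)
    show "sig gi (sig g x) = x"
    proof (cases "x < 1/2")
      case True then show ?thesis using x by (simp add: sig_def)
    next
      case False
      have gx: "g (2*x-1) \<in> {0..1}" using r1[OF a[OF False]] .
      have s1: "sig g x = (1 + g (2*x-1))/2" using x False by (simp add: sig_def)
      have s2: "sig gi ((1 + g (2*x-1))/2) = (1 + gi (g (2*x-1)))/2"
        using gx by (simp add: sig_def)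
      show ?thesis unfolding s1 s2 using l1[OF a[OF False]] by simp
    qed
    show "sig g (sig gi x) = x"
    proof (cases "x < 1/2")
      case True then show ?thesis using x by (simp add: sig_def)
    next
      case False
      have gx: "gi (2*x-1) \<in> {0..1}" using r2[OF a[OF False]] .
      have s1: "sig gi x = (1 + gi (2*x-1))/2" using x False by (simp add: sig_def)
      have s2: "sig g ((1 + gi (2*x-1))/2) = (1 + g (gi (2*x-1)))/2"
        using gx by (simp add: sig_def)
      show ?thesis unfolding s1 s2 using l2[OF a[OF False]] by simp
    qed
  qed
qed

lemma sig_compose: assumes f: "f \<in> Bij {0..1}" and g: "g \<in> Bij {0..1}"
  shows "sig (compose {0..1} f g) = compose {0..1} (sig f) (sig g)"
proof (rule extensionalityI[where A="{0..1}"])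
  show "sig (compose {0..1} f g) \<in> extensional {0..1}" by (simp add: sig_def)
  show "compose {0..1} (sig f) (sig g) \<in> extensional {0..1}" by (simp add: compose_def)
  fix x :: real assume x: "x \<in> {0..1}"
  show "sig (compose {0..1} f g) x = compose {0..1} (sig f) (sig g) x"
  proof (cases "x < 1/2")
    case True then show ?thesis using x by (simp add: sig_def compose_def)
  next
    case False
    have a: "2*x - 1 \<in> {0..1}" using x False by auto
    have gx: "g (2*x-1) \<in> {0..1}" using Bij_range[OF g a] .
    have s1: "sig g x = (1 + g (2*x-1))/2" using x False by (simp add: sig_def)
    have s2: "sig f ((1 + g (2*x-1))/2) = (1 + f (g (2*x-1)))/2"
      using gx by (simp add: sig_def)
    have s3: "sig (compose {0..1} f g) x = (1 + f (g (2*x-1)))/2"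
      using x False a by (simp add: sig_def compose_def)
    have s4: "compose {0..1} (sig f) (sig g) x = sig f (sig g x)" using x by (simp add: compose_def)
    show ?thesis unfolding s4 s1 s2 s3 ..
  qed
qed

lemma sig_one: "sig (\<lambda>x\<in>{0..1::real}. x) = (\<lambda>x\<in>{0..1::real}. x)"
  by (rule extensionalityI[where A="{0..1}"]) (auto simp: sig_def)

lemma x1_sig: "x1 = sig x0"
  by (rule extensionalityI[where A="{0..1}"]) (auto simp: sig_def x0_def x1_def field_simps)

lemma sig_zero: "sig g 0 = 0" by (simp add: sig_def)

lemma rel_lemma: assumes Y: "Y \<in> Bij {0..1}" and Y0: "Y 0 = 0"
  shows "compose {0..1} (sig Y) x0 = compose {0..1} x0 (sig (sig Y))"
proof (rule extensionalityI[where A="{0..1}"])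
  show "compose {0..1} (sig Y) x0 \<in> extensional {0..1}" by (simp add: compose_def)
  show "compose {0..1} x0 (sig (sig Y)) \<in> extensional {0..1}" by (simp add: compose_def)
  fix t :: real assume t: "t \<in> {0..1}"
  show "compose {0..1} (sig Y) x0 t = compose {0..1} x0 (sig (sig Y)) t"
  proof -
    consider "t < 1/2" | "t = 1/2" | "1/2 < t \<and> t < 3/4" | "t = 3/4" | "3/4 < t" by linarith
    then show ?thesis
    proof cases
      case 1 then show ?thesis using t by (simp add: compose_def sig_def x0_def)
    next
      case 2 then show ?thesis using t Y0 by (simp add: compose_def sig_def x0_def)
    next
      case 3 then show ?thesis using t by (simp add: compose_def sig_def x0_def)
    next
      case 4
      have a1: "x0 (3/4) = 1/2" by (simp add: x0_def)
      have a2: "sig Y (1/2) = 1/2" using Y0 by (simp add: sig_def)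
      have a3: "sig (sig Y) (3/4) = 3/4" using a2 by (simp add: sig_def)
      have a4: "x0 (1/2) = 1/4" by (simp add: x0_def)
      have tt: "t = 3/4" using 4 .
      have "compose {0..1} (sig Y) x0 t = sig Y (x0 (3/4))" unfolding tt by (simp add: compose_def)
      also have "\<dots> = 1/2" unfolding a1 a2 ..
      also have "\<dots> = x0 (sig (sig Y) (3/4))" unfolding a3 a1 ..
      also have "\<dots> = compose {0..1} x0 (sig (sig Y)) t" unfolding tt by (simp add: compose_def)
      finally show ?thesis .
    next
      case 5
      have a: "4*t - 3 \<in> {0..1}" using t 5 by auto
      have b: "Y (4*t-3) \<in> {0..1}" using Bij_range[OF Y a] .
      have c1: "compose {0..1} (sig Y) x0 t = (1 + Y (4*t-3))/2"
      proof -
        have "x0 t = 2*t - 1" using t 5 by (simp add: x0_def)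
        moreover have "sig Y (2*t-1) = (1 + Y (4*t-3))/2" using t 5
          by (simp add: sig_def algebra_simps)
        ultimately show ?thesis using t by (simp add: compose_def)
      qed
      have c2: "compose {0..1} x0 (sig (sig Y)) t = (1 + Y (4*t-3))/2"
      proof -
        have s1: "sig Y (2*t-1) = (1 + Y (4*t-3))/2" using t 5
          by (simp add: sig_def algebra_simps)
        have s2: "sig (sig Y) t = (1 + (1 + Y (4*t-3))/2)/2" using t 5 s1
          by (simp add: sig_def)
        have "x0 ((1 + (1 + Y (4*t-3))/2)/2) = (1 + Y (4*t-3))/2" using b
          by (auto simp: x0_def field_simps)
        moreover have "compose {0..1} x0 (sig (sig Y)) t = x0 (sig (sig Y) t)" using t by (simp add: compose_def)
        ultimately show ?thesis unfolding s2 by simp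
      qed
      show ?thesis using c1 c2 by simp
    qed
  qed
qed

interpretation BBg: group BB by (rule group_BijGroup)

lemma x0_car[simp]: "x0 \<in> carrier BB" using x0_Bij BB_carrier by simp

lemma sig_car[simp]: "g \<in> carrier BB \<Longrightarrow> sig g \<in> carrier BB"
  using sig_Bij BB_carrier by simp

lemma sig_mult: "f \<in> carrier BB \<Longrightarrow> g \<in> carrier BB \<Longrightarrow> sig (f \<otimes>\<^bsub>BB\<^esub> g) = sig f \<otimes>\<^bsub>BB\<^esub> sig g"
  using sig_compose[of f g] sig_Bij[of f] sig_Bij[of g] compose_Bij[of f "{0..1}" g]
  by (simp add: BB_carrier BB_mult)

lemma sig_one': "sig \<one>\<^bsub>BB\<^esub> = \<one>\<^bsub>BB\<^esub>"
  using sig_one by (simp add: BB_one)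

lemma sig_pow: "f \<in> carrier BB \<Longrightarrow> sig (f [^]\<^bsub>BB\<^esub> (a::nat)) = sig f [^]\<^bsub>BB\<^esub> a"
  by (induction a) (simp_all add: sig_one' sig_mult)

lemma sigk_car: "g \<in> carrier BB \<Longrightarrow> (sig ^^ k) g \<in> carrier BB"
  by (induction k) auto

lemma sigk_mult: "f \<in> carrier BB \<Longrightarrow> g \<in> carrier BB \<Longrightarrow>
   (sig ^^ k) (f \<otimes>\<^bsub>BB\<^esub> g) = (sig ^^ k) f \<otimes>\<^bsub>BB\<^esub> (sig ^^ k) g"
  by (induction k) (simp_all add: sig_mult sigk_car)

definition Xg :: "nat \<Rightarrow> real \<Rightarrow> real" where "Xg n = (sig ^^ n) x0"

lemma X_car[simp]: "Xg n \<in> carrier BB" unfolding Xg_def by (rule sigk_car) simp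
lemma X_Bij: "Xg n \<in> Bij {0..1}" using X_car BB_carrier by simp
lemma X_Suc: "Xg (Suc n) = sig (Xg n)" by (simp add: Xg_def)
lemma X_0: "Xg 0 = x0" by (simp add: Xg_def)
lemma X_1: "Xg (Suc 0) = x1" by (simp add: Xg_def x1_sig)
lemma X_zero: "Xg n 0 = 0"
  by (cases n) (simp_all add: Xg_def x0_def sig_zero)
lemma sigk_X: "(sig ^^ k) (Xg j) = Xg (j + k)"
proof -
  have "(sig ^^ k) ((sig ^^ j) x0) = (sig ^^ (k + j)) x0" by (simp add: funpow_add)
  then show ?thesis by (simp add: Xg_def add.commute)
qed

lemma X_rel0: "n \<ge> 1 \<Longrightarrow> Xg n \<otimes>\<^bsub>BB\<^esub> x0 = x0 \<otimes>\<^bsub>BB\<^esub> Xg (Suc n)"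
proof -
  assume "n \<ge> 1"
  then obtain m where n: "n = Suc m" by (cases n) auto
  have "compose {0..1} (sig (Xg m)) x0 = compose {0..1} x0 (sig (sig (Xg m)))"
    by (rule rel_lemma[OF X_Bij X_zero])
  then show ?thesis unfolding n X_Suc using X_Bij[of "Suc m"] X_Bij[of "Suc (Suc m)"] x0_Bij
    by (simp add: BB_mult X_Suc)
qed

lemma X_rel: "k < m \<Longrightarrow> Xg m \<otimes>\<^bsub>BB\<^esub> Xg k = Xg k \<otimes>\<^bsub>BB\<^esub> Xg (Suc m)"
proof -
  assume km: "k < m"
  have "Xg (m - k) \<otimes>\<^bsub>BB\<^esub> x0 = x0 \<otimes>\<^bsub>BB\<^esub> Xg (Suc (m - k))" using km by (intro X_rel0) simp
  then have "(sig ^^ k) (Xg (m - k) \<otimes>\<^bsub>BB\<^esub> Xg 0) = (sig ^^ k) (Xg 0 \<otimes>\<^bsub>BB\<^esub> Xg (Suc (m - k)))"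
    by (simp add: X_0)
  then show ?thesis using km by (simp add: sigk_mult sigk_X)
qed

abbreviation "Gen \<equiv> generate BB {x0, x1}"

lemma Gen_mult: "a \<in> Gen \<Longrightarrow> b \<in> Gen \<Longrightarrow> a \<otimes>\<^bsub>BB\<^esub> b \<in> Gen"
  by (rule generate.eng)

lemma Gen_sub: "Gen \<subseteq> carrier BB"
  by (rule BBg.generate_incl) (simp add: X_1[symmetric])

lemma X_Gen: "Xg n \<in> Gen"
proof (induction n rule: nat_less_induct)
  case (1 n)
  show ?case
  proof (cases n)
    case 0 then show ?thesis by (simp add: X_0 generate.incl)
  next
    case (Suc m)
    show ?thesis
    proof (cases m)
      case 0 then show ?thesis using Suc by (simp add: X_1 generate.incl)
    next
      case (Suc p)
      have r: "Xg (Suc p) \<otimes>\<^bsub>BB\<^esub> x0 = x0 \<otimes>\<^bsub>BB\<^esub> Xg (Suc (Suc p))" by (rule X_rel0) simp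
      have "Xg (Suc (Suc p)) = inv\<^bsub>BB\<^esub> x0 \<otimes>\<^bsub>BB\<^esub> (Xg (Suc p) \<otimes>\<^bsub>BB\<^esub> x0)"
        unfolding r by (simp add: BBg.m_assoc[symmetric])
      moreover have "inv\<^bsub>BB\<^esub> x0 \<in> Gen" by (rule generate.inv) simp
      moreover have "Xg (Suc p) \<in> Gen" using 1 \<open>n = Suc m\<close> Suc by simp
      moreover have "x0 \<in> Gen" by (rule generate.incl) simp
      ultimately show ?thesis using \<open>n = Suc m\<close> Suc by (simp add: Gen_mult)
    qed
  qed
qed

lemma pow_Gen: "a \<in> Gen \<Longrightarrow> a [^]\<^bsub>BB\<^esub> (k::nat) \<in> Gen"
  by (induction k) (simp_all add: generate.one Gen_mult)

fun evk :: "nat \<Rightarrow> nat list \<Rightarrow> real \<Rightarrow> real" where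
  "evk k [] = \<one>\<^bsub>BB\<^esub>"
| "evk k (a # as) = (Xg k [^]\<^bsub>BB\<^esub> a) \<otimes>\<^bsub>BB\<^esub> evk (Suc k) as"

lemma evk_car[simp]: "evk k as \<in> carrier BB"
  by (induction as arbitrary: k) auto

lemma evk_Gen: "evk k as \<in> Gen"
  by (induction as arbitrary: k) (simp_all add: generate.one Gen_mult pow_Gen X_Gen)

lemma sig_evk: "sig (evk k as) = evk (Suc k) as"
  by (induction as arbitrary: k) (simp_all add: sig_one' sig_mult sig_pow X_Suc)

lemma ev_cons: "evk 0 (a # as) = (x0 [^]\<^bsub>BB\<^esub> a) \<otimes>\<^bsub>BB\<^esub> sig (evk 0 as)"
  by (simp add: sig_evk X_0)

fun push :: "nat \<Rightarrow> nat list \<Rightarrow> nat list" where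
  "push I [] = replicate I 0 @ [Suc 0]"
| "push 0 (a # as) = Suc a # as"
| "push (Suc I) (a # as) = a # push (I + a) as"

lemma evk_rep: "evk k (replicate I 0 @ [Suc 0]) = Xg (k + I)"
proof (induction I arbitrary: k)
  case 0 then show ?case by simp
next
  case (Suc I) then show ?case by simp
qed

lemma X_pow_comm: "k < m \<Longrightarrow> Xg m \<otimes>\<^bsub>BB\<^esub> (Xg k [^]\<^bsub>BB\<^esub> a) = (Xg k [^]\<^bsub>BB\<^esub> a) \<otimes>\<^bsub>BB\<^esub> Xg (m + a)"
proof (induction a arbitrary: m)
  case 0 then show ?case by simp
next
  case (Suc a)
  have e: "Xg k [^]\<^bsub>BB\<^esub> Suc a = Xg k \<otimes>\<^bsub>BB\<^esub> (Xg k [^]\<^bsub>BB\<^esub> a)"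
    by (rule BBg.nat_pow_Suc2) simp
  have "Xg m \<otimes>\<^bsub>BB\<^esub> (Xg k [^]\<^bsub>BB\<^esub> Suc a) = (Xg m \<otimes>\<^bsub>BB\<^esub> Xg k) \<otimes>\<^bsub>BB\<^esub> (Xg k [^]\<^bsub>BB\<^esub> a)"
    unfolding e by (simp add: BBg.m_assoc)
  also have "\<dots> = Xg k \<otimes>\<^bsub>BB\<^esub> (Xg (Suc m) \<otimes>\<^bsub>BB\<^esub> (Xg k [^]\<^bsub>BB\<^esub> a))"
    using Suc.prems by (simp add: X_rel BBg.m_assoc)
  also have "\<dots> = Xg k \<otimes>\<^bsub>BB\<^esub> ((Xg k [^]\<^bsub>BB\<^esub> a) \<otimes>\<^bsub>BB\<^esub> Xg (Suc m + a))"
    using Suc.prems by (simp add: Suc.IH)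
  also have "\<dots> = (Xg k [^]\<^bsub>BB\<^esub> Suc a) \<otimes>\<^bsub>BB\<^esub> Xg (m + Suc a)"
  proof -
    have e: "Xg k [^]\<^bsub>BB\<^esub> Suc a = Xg k \<otimes>\<^bsub>BB\<^esub> (Xg k [^]\<^bsub>BB\<^esub> a)"
      by (rule BBg.nat_pow_Suc2) simp
    show ?thesis unfolding e by (simp add: BBg.m_assoc)
  qed
  finally show ?case .
qed

lemma push_evk: "Xg (k + I) \<otimes>\<^bsub>BB\<^esub> evk k as = evk k (push I as)"
proof (induction as arbitrary: k I)
  case Nil then show ?case by (simp add: evk_rep)
next
  case (Cons a as)
  show ?case
  proof (cases I)
    case 0
    have e: "Xg k [^]\<^bsub>BB\<^esub> Suc a = Xg k \<otimes>\<^bsub>BB\<^esub> (Xg k [^]\<^bsub>BB\<^esub> a)"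
      by (rule BBg.nat_pow_Suc2) simp
    show ?thesis using 0 by (simp only: push.simps evk.simps e add_0_right) (simp add: BBg.m_assoc)
  next
    case (Suc J)
    have "Xg (k + I) \<otimes>\<^bsub>BB\<^esub> evk k (a # as) = (Xg (k + I) \<otimes>\<^bsub>BB\<^esub> (Xg k [^]\<^bsub>BB\<^esub> a)) \<otimes>\<^bsub>BB\<^esub> evk (Suc k) as"
      by (simp add: BBg.m_assoc)
    also have "\<dots> = (Xg k [^]\<^bsub>BB\<^esub> a) \<otimes>\<^bsub>BB\<^esub> (Xg (Suc k + (J + a)) \<otimes>\<^bsub>BB\<^esub> evk (Suc k) as)"
      using Suc by (simp add: X_pow_comm BBg.m_assoc add.assoc)
    also have "\<dots> = evk k (push I (a # as))" using Suc Cons.IH[of "Suc k" "J + a"] by simp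
    finally show ?thesis .
  qed
qed

lemma x0pow_val: "t \<in> {0..1/2} \<Longrightarrow> (x0 [^]\<^bsub>BB\<^esub> (a::nat)) t = t / 2^a"
proof (induction a arbitrary: t)
  case 0 then show ?case by (simp add: BB_one)
next
  case (Suc a)
  have c: "x0 [^]\<^bsub>BB\<^esub> a \<in> Bij {0..1}" using BB_carrier BBg.nat_pow_closed[of x0 a] x0_Bij by simp
  have "(x0 [^]\<^bsub>BB\<^esub> Suc a) t = compose {0..1} (x0 [^]\<^bsub>BB\<^esub> a) x0 t"
    using c x0_Bij by (simp add: BB_mult)
  also have "\<dots> = (x0 [^]\<^bsub>BB\<^esub> a) (t/2)" using Suc.prems by (simp add: compose_def x0_def)
  also have "\<dots> = t / 2 ^ Suc a" using Suc.prems Suc.IH[of "t/2"] by simp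
  finally show ?case .
qed

lemma sig_inj: assumes f: "f \<in> Bij {0..1}" and g: "g \<in> Bij {0..1}" and e: "sig f = sig g"
  shows "f = g"
proof (rule extensionalityI[where A="{0..1}"])
  show "f \<in> extensional {0..1}" using f Bij_imp_extensional by blast
  show "g \<in> extensional {0..1}" using g Bij_imp_extensional by blast
  fix u :: real assume u: "u \<in> {0..1}"
  have "sig f ((1+u)/2) = sig g ((1+u)/2)" using e by simp
  then show "f u = g u" using u by (simp add: sig_def)
qed

lemma ev_val: "evk 0 (a # as) (1/4) = 1/4 / 2^a"
proof -
  have c: "x0 [^]\<^bsub>BB\<^esub> a \<in> Bij {0..1}" using BB_carrier BBg.nat_pow_closed[of x0 a] x0_Bij by simp
  have d: "sig (evk 0 as) \<in> Bij {0..1}" using BB_carrier sig_car[OF evk_car[of 0 as]] by simp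
  have "evk 0 (a # as) (1/4) = compose {0..1} (x0 [^]\<^bsub>BB\<^esub> a) (sig (evk 0 as)) (1/4)"
    unfolding ev_cons using c d by (simp add: BB_mult)
  also have "\<dots> = (x0 [^]\<^bsub>BB\<^esub> a) (1/4)" by (simp add: compose_def sig_def)
  also have "\<dots> = 1/4 / 2^a" by (rule x0pow_val) simp
  finally show ?thesis .
qed

lemma ev_inj: "length as = length bs \<Longrightarrow> evk 0 as = evk 0 bs \<Longrightarrow> as = bs"
proof (induction as arbitrary: bs)
  case Nil then show ?case by simp
next
  case (Cons a as)
  then obtain b bs' where bs: "bs = b # bs'" by (cases bs) auto
  have "evk 0 (a # as) (1/4) = evk 0 (b # bs') (1/4)" using Cons.prems bs by simp
  then have "(1/4::real) / 2^a = 1/4 / 2^b" by (simp only: ev_val)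
  then have "(2::real)^a = 2^b" by (simp add: field_simps)
  then have ab: "a = b" by simp
  have "(x0 [^]\<^bsub>BB\<^esub> a) \<otimes>\<^bsub>BB\<^esub> sig (evk 0 as) = (x0 [^]\<^bsub>BB\<^esub> a) \<otimes>\<^bsub>BB\<^esub> sig (evk 0 bs')"
    using Cons.prems bs ab ev_cons by metis
  then have "sig (evk 0 as) = sig (evk 0 bs')"
    by (rule BBg.l_cancel) auto
  then have "evk 0 as = evk 0 bs'" using sig_inj BB_carrier evk_car by blast
  then have "as = bs'" using Cons.IH[of bs'] Cons.prems bs by simp
  then show ?case using ab bs by simp
qed


definition is_code :: "nat list \<Rightarrow> bool" where
  "is_code c \<longleftrightarrow> c \<noteq> [] \<and> sum_list c + 1 = length c \<and> (\<forall>j < length c. j \<le> sum_list (take j c))"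

lemma push_append_gen:
  "(\<forall>j < length c. j + 1 \<le> J + sum_list (take j c)) \<Longrightarrow>
   push J (c @ rest) = c @ push (J + sum_list c - length c) rest"
proof (induction c arbitrary: J)
  case Nil then show ?case by simp
next
  case (Cons a c)
  from Cons.prems[rule_format, of 0] obtain J' where J: "J = Suc J'" by (cases J) auto
  have h: "\<forall>j < length c. j + 1 \<le> (J' + a) + sum_list (take j c)"
  proof (intro allI impI)
    fix j assume "j < length c"
    then have "Suc j < length (a # c)" by simp
    from Cons.prems[rule_format, OF this] show "j + 1 \<le> (J' + a) + sum_list (take j c)"
      using J by simp
  qed
  have "push J ((a # c) @ rest) = a # push (J' + a) (c @ rest)" using J by simp
  also have "\<dots> = a # c @ push (J' + a + sum_list c - length c) rest" using Cons.IH[OF h] by simp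
  also have "J' + a + sum_list c - length c = J + sum_list (a # c) - length (a # c)" using J by simp
  finally show ?case by simp
qed

lemma push_code: "is_code c \<Longrightarrow> push (Suc I) (c @ rest) = c @ push I rest"
proof -
  assume c: "is_code c"
  have "\<forall>j < length c. j + 1 \<le> Suc I + sum_list (take j c)" using c unfolding is_code_def by auto
  moreover have "Suc I + sum_list c - length c = I" using c unfolding is_code_def by arith
  ultimately show ?thesis using push_append_gen by metis
qed

lemma push_codes: "(\<forall>c\<in>set cs. is_code c) \<Longrightarrow> push (length cs + I) (concat cs @ rest) = concat cs @ push I rest"
  by (induction cs) (simp_all add: push_code)

lemma code_hd0: "is_code (0 # l) \<Longrightarrow> l = []"
proof (rule ccontr)
  assume c: "is_code (0 # l)" and "l \<noteq> []"
  then have "1 < length (0 # l)" by (cases l) auto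
  with c have "1 \<le> sum_list (take 1 (0 # l))" unfolding is_code_def by blast
  then show False by simp
qed

lemma code_len: "is_code c \<Longrightarrow> length c \<ge> 1" unfolding is_code_def by (cases c) auto

lemma sum_take_le: "sum_list (take i xs) \<le> sum_list (take j (xs::nat list))" if "i \<le> j"
proof -
  have "take j xs = take i xs @ take (j - i) (drop i xs)" using that
    by (metis le_add_diff_inverse take_add)
  then show ?thesis by simp
qed

lemma code_split:
  assumes c: "is_code (Suc k # l)"
  shows "\<exists>c1 c2. is_code c1 \<and> is_code c2 \<and> Suc k # l = (Suc (hd c1) # tl c1) @ c2
           \<and> length c1 + length c2 = length (Suc k # l)"
proof -
  define c where "c = Suc k # l"
  define d where "d = k # l"
  have lc: "length d = length c" by (simp add: c_def d_def)
  have td: "sum_list (take j c) = sum_list (take j d) + 1" if "j \<ge> 1" for j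
    using that by (cases j) (simp_all add: c_def d_def)
  have cc: "is_code c" using c c_def by simp
  have sc: "sum_list c + 1 = length c" using cc unfolding is_code_def by blast
  have pc: "\<And>j. j < length c \<Longrightarrow> j \<le> sum_list (take j c)" using cc unfolding is_code_def by blast
  have sd: "sum_list d + 2 = length c" using sc by (simp add: c_def d_def)
  define P where "P j \<longleftrightarrow> sum_list (take j d) < j" for j
  have Pl: "P (length d)" using sd lc by (simp add: P_def)
  define j1 where "j1 = (LEAST j. P j)"
  have Pj1: "P j1" unfolding j1_def by (rule LeastI[of P, OF Pl])
  have lj1: "j1 \<le> length d" using Pl unfolding j1_def by (rule Least_le)
  have nP: "\<not> P j" if "j < j1" for j using that unfolding j1_def by (rule not_less_Least)
  have j1pos: "j1 \<ge> 1" using Pj1 by (cases j1) (auto simp: P_def)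
  have s1: "sum_list (take j1 d) = j1 - 1"
  proof -
    have "\<not> P (j1 - 1)" using nP j1pos by simp
    then have "j1 - 1 \<le> sum_list (take (j1 - 1) d)" by (simp add: P_def)
    also have "\<dots> \<le> sum_list (take j1 d)" by (rule sum_take_le) simp
    finally show ?thesis using Pj1 by (simp add: P_def)
  qed
  have j1lt: "j1 < length c"
  proof (rule ccontr)
    assume "\<not> j1 < length c"
    then have "j1 = length d" using lj1 lc by simp
    then show False using s1 sd lc by simp
  qed
  define c1 where "c1 = take j1 d"
  define c2 where "c2 = drop j1 d"
  have code1: "is_code c1"
    unfolding is_code_def c1_def
  proof (intro conjI allI impI)
    show "take j1 d \<noteq> []" using j1pos lj1 by (cases d) auto
    show "sum_list (take j1 d) + 1 = length (take j1 d)" using s1 j1pos lj1 by simp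
    fix j assume "j < length (take j1 d)"
    then have "j < j1" by simp
    then have "\<not> P j" by (rule nP)
    then show "j \<le> sum_list (take j (take j1 d))" using \<open>j < j1\<close> by (simp add: P_def min_def)
  qed
  have code2: "is_code c2"
    unfolding is_code_def c2_def
  proof (intro conjI allI impI)
    show "drop j1 d \<noteq> []" using j1lt lc by simp
    have "sum_list d = sum_list (take j1 d) + sum_list (drop j1 d)"
      by (metis append_take_drop_id sum_list_append)
    then show "sum_list (drop j1 d) + 1 = length (drop j1 d)" using s1 sd lc j1lt j1pos by simp
    fix i assume i: "i < length (drop j1 d)"
    have e: "take (j1 + i) d = take j1 d @ take i (drop j1 d)" by (simp add: take_add)
    have "j1 + i < length c" using i lc by simp
    then have "j1 + i \<le> sum_list (take (j1 + i) c)" by (rule pc)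
    then have "j1 + i \<le> sum_list (take (j1 + i) d) + 1" using td[of "j1 + i"] j1pos by simp
    then show "i \<le> sum_list (take i (drop j1 d))" using e s1 j1pos by simp
  qed
  have hd1: "Suc (hd c1) # tl c1 = take j1 c"
    using j1pos unfolding c1_def c_def d_def by (cases j1) auto
  have dr: "drop j1 c = c2" unfolding c2_def c_def d_def using j1pos by (cases j1) auto
  have "c = (Suc (hd c1) # tl c1) @ c2" unfolding hd1 dr[symmetric] by (rule append_take_drop_id[symmetric])
  moreover have "length c1 + length c2 = length c" unfolding c1_def c2_def using lj1 lc by simp
  ultimately have "is_code c1 \<and> is_code c2 \<and> c = (Suc (hd c1) # tl c1) @ c2 \<and> length c1 + length c2 = length c"
    using code1 code2 by simp
  then show ?thesis unfolding c_def by (intro exI[of _ c1] exI[of _ c2])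
qed

lemma code_prefix:
  assumes c: "is_code c" and d: "is_code d" and e: "c @ r = d @ r'"
  shows "c = d \<and> r = r'"
proof -
  have noprefix: False if cd: "is_code c" "is_code d" "c @ r = d @ r'" "length c < length d" for c d r r'
  proof -
    have "take (length c) (c @ r) = take (length c) (d @ r')" using cd(3) by simp
    then have t: "take (length c) d = c" using cd(4) by simp
    have "length c \<le> sum_list (take (length c) d)" using cd(2,4) unfolding is_code_def by blast
    then show False using t cd(1) unfolding is_code_def by simp
  qed
  have "length c = length d"
    using noprefix[OF c d e] noprefix[OF d c e[symmetric]] linorder_neqE_nat by blast
  then show ?thesis using e by simp
qed

lemma concat_codes_inj:
  "(\<forall>c\<in>set cs. is_code c) \<Longrightarrow> (\<forall>c\<in>set ds. is_code c) \<Longrightarrow> concat cs = concat ds \<Longrightarrow> cs = ds"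
proof (induction cs arbitrary: ds)
  case Nil
  show ?case
  proof (cases ds)
    case Nil then show ?thesis by simp
  next
    case (Cons d ds')
    then have "is_code d" using Nil.prems(2) by simp
    then have "d \<noteq> []" unfolding is_code_def by blast
    then show ?thesis using Nil.prems(3) Cons by simp
  qed
next
  case (Cons c cs)
  have cc: "is_code c" using Cons.prems(1) by simp
  show ?case
  proof (cases ds)
    case Nil
    have "c \<noteq> []" using cc unfolding is_code_def by blast
    then show ?thesis using Cons.prems(3) Nil by simp
  next
    case (Cons d ds')
    have dd: "is_code d" using Cons.prems(2) \<open>ds = d # ds'\<close> by simp
    have "c @ concat cs = d @ concat ds'" using Cons.prems(3) \<open>ds = d # ds'\<close> by simp
    then have cd: "c = d \<and> concat cs = concat ds'" by (rule code_prefix[OF cc dd])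
    have "cs = ds'"
      by (rule Cons.IH) (use Cons.prems \<open>ds = d # ds'\<close> cd in auto)
    then show ?thesis using cd \<open>ds = d # ds'\<close> by simp
  qed
qed


lemma sum_take_add: "sum_list (take (r + i) w) = sum_list (take r w) + sum_list (take i (drop r (w::nat list)))"
  by (simp add: take_add)

lemma sum_drop: "sum_list (w::nat list) = sum_list (take r w) + sum_list (drop r w)"
  by (metis append_take_drop_id sum_list_append)

lemma cycle_exists:
  assumes len: "length w = K" and K: "K \<ge> 1" and s: "sum_list w + 1 = K"
  shows "\<exists>r<K. is_code (rotate r w)"
proof -
  define p where "p j = int (sum_list (take j w)) - int j" for j
  have pK: "p K = -1" using len s by (simp add: p_def)
  have p0: "p 0 = 0" by (simp add: p_def)
  define m where "m = Min (p ` {..<K})"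
  have ne: "{..<K} \<noteq> {}" using K by (simp add: lessThan_empty_iff)
  have mle: "m \<le> p j" if "j < K" for j unfolding m_def using that by (intro Min_le) auto
  have "m \<in> p ` {..<K}" unfolding m_def using ne by (intro Min_in) auto
  then have mex: "\<exists>j. j < K \<and> p j = m" by auto
  define r where "r = (LEAST j. j < K \<and> p j = m)"
  have r: "r < K \<and> p r = m" unfolding r_def by (rule LeastI_ex[OF mex])
  have rmin: "p j > m" if "j < r" for j
  proof -
    have "\<not> (j < K \<and> p j = m)" using that unfolding r_def by (rule not_less_Least)
    moreover have "j < K" using that r by simp
    ultimately show ?thesis using mle[of j] by simp
  qed
  define v where "v = drop r w @ take r w"
  have rot: "rotate r w = v" unfolding v_def using r len by (simp add: rotate_drop_take)
  have lv: "length v = K" unfolding v_def using len r by simp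
  have sv: "sum_list v = sum_list w" unfolding v_def using sum_drop[of w r] by simp
  have "is_code v"
    unfolding is_code_def
  proof (intro conjI allI impI)
    show "v \<noteq> []" using lv K by auto
    show "sum_list v + 1 = length v" using sv s lv by simp
    fix i assume i: "i < length v"
    show "i \<le> sum_list (take i v)"
    proof (cases "i \<le> K - r")
      case True
      have t: "take i v = take i (drop r w)" unfolding v_def using True len by simp
      have e: "int (sum_list (take i v)) - int i = p (r + i) - p r"
        unfolding t p_def sum_take_add by simp
      show ?thesis
      proof (cases "r + i < K")
        case True
        then have "p (r + i) \<ge> m" by (rule mle)
        then show ?thesis using e r by simp
      next
        case False
        have rK: "r < K" using r by simp
        have ri: "r + i = K" using False \<open>i \<le> K - r\<close> rK by linarith
        have "r > 0" using ri i lv by simp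
        then have "p 0 > m" by (rule rmin)
        then have "m \<le> -1" using p0 by simp
        then show ?thesis using e ri pK r by simp
      qed
    next
      case False
      define i' where "i' = i - (K - r)"
      have i'r: "i' < r" unfolding i'_def using False i lv r by simp
      have t: "take i v = drop r w @ take i' w" using False len i'r unfolding v_def i'_def by (simp add: min_def)
      have "int (sum_list (take i v)) = int (sum_list w) - int (sum_list (take r w)) + int (sum_list (take i' w))"
        unfolding t using sum_drop[of w r] by simp
      then have e: "int (sum_list (take i v)) - int i = p K - p r + p i'"
        unfolding p_def using len False i lv r i'_def by (simp add: of_nat_diff)
      have "p i' > m" using i'r by (rule rmin)
      then show ?thesis using e pK r by simp
    qed
  qed
  then have "is_code (rotate r w)" using rot by simp
  then show ?thesis using r by blast
qed

definition codesE :: "nat \<Rightarrow> nat list set" where "codesE K = {c. is_code c \<and> length c = K}"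

lemma code_le: "is_code c \<Longrightarrow> x \<in> set c \<Longrightarrow> x \<le> length c"
  unfolding is_code_def using member_le_sum_list[of x c] by simp

lemma finite_codesE: "finite (codesE K)"
proof -
  have "codesE K \<subseteq> {c. set c \<subseteq> {0..K} \<and> length c \<le> K}"
  proof
    fix c assume "c \<in> codesE K"
    then have c: "is_code c" "length c = K" unfolding codesE_def by auto
    have "set c \<subseteq> {0..K}" using code_le[OF c(1)] c(2) by auto
    then show "c \<in> {c. set c \<subseteq> {0..K} \<and> length c \<le> K}" using c(2) by simp
  qed
  moreover have "finite {c. set c \<subseteq> {0..K} \<and> length c \<le> K}" by (rule finite_lists_length_le) simp
  ultimately show ?thesis by (rule finite_subset)
qed

lemma card_codesE: fixes n :: nat
  defines "K \<equiv> Suc n"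
  shows "(2*n) choose n \<le> K * card (codesE K)"
proof -
  have K: "K \<ge> 1" unfolding K_def by simp
  let ?W = "{w::nat list. length w = K \<and> sum_list w = K - 1}"
  have cW: "card ?W = (2*n) choose n"
    using card_length_sum_list[of K "K - 1"] unfolding K_def by (simp add: conj_commute mult_2)
  have sub: "?W \<subseteq> (\<Union>i<K. rotate i ` codesE K)"
  proof
    fix w assume w: "w \<in> ?W"
    then obtain r where r: "r < K" "is_code (rotate r w)"
      using cycle_exists[of w K] K by auto
    have e1: "rotate (K - r) (rotate r w) = w"
      using w r by (simp add: rotate_rotate rotate_length01)
    have cE: "rotate r w \<in> codesE K" using r w by (simp add: codesE_def)
    have lr: "length (rotate r w) = K" using w by simp
    have e2: "rotate ((K - r) mod K) (rotate r w) = rotate (K - r) (rotate r w)"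
      using rotate_conv_mod[of "K - r" "rotate r w"] unfolding lr by simp
    have wi: "w = rotate ((K - r) mod K) (rotate r w)" using e1 e2 by simp
    have m: "w \<in> rotate ((K - r) mod K) ` codesE K" by (rule image_eqI[where f="rotate ((K - r) mod K)", OF wi cE])
    have "(K - r) mod K \<in> {..<K}" using K by simp
    then show "w \<in> (\<Union>i<K. rotate i ` codesE K)" using m by (rule UN_I)
  qed
  have "card ?W \<le> card (\<Union>i<K. rotate i ` codesE K)"
    by (rule card_mono[OF _ sub]) (simp add: finite_codesE)
  also have "\<dots> \<le> (\<Sum>i<K. card (rotate i ` codesE K))" by (rule card_UN_le) simp
  also have "\<dots> \<le> (\<Sum>i<K. card (codesE K))" by (intro sum_mono card_image_le finite_codesE)
  also have "\<dots> = K * card (codesE K)" by simp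
  finally show ?thesis using cW by simp
qed


definition codesK :: "nat \<Rightarrow> nat list set" where "codesK K = {c. is_code c \<and> length c \<le> K}"
definition Seq :: "nat \<Rightarrow> nat \<Rightarrow> nat list list set" where
  "Seq K N = {cs. set cs \<subseteq> codesK K \<and> sum_list (map length cs) = N}"
definition Cf :: "nat \<Rightarrow> nat \<Rightarrow> (nat list list \<times> nat) set" where
  "Cf K N = Sigma (Seq K N) (\<lambda>cs. {..< length cs - 1})"
definition GG :: "nat \<Rightarrow> nat \<Rightarrow> nat" where "GG K N = (\<Sum>cs\<in>Seq K N. length cs)"
definition AA :: "nat \<Rightarrow> nat \<Rightarrow> nat" where "AA K N = card (Seq K N)"
definition enc :: "nat list list \<times> nat \<Rightarrow> nat list" where "enc p = snd p # concat (fst p)"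

lemma finite_codesK: "finite (codesK K)"
proof -
  have "codesK K \<subseteq> {c. set c \<subseteq> {0..K} \<and> length c \<le> K}"
  proof
    fix c assume "c \<in> codesK K"
    then have c: "is_code c" "length c \<le> K" unfolding codesK_def by auto
    have "set c \<subseteq> {0..K}" using code_le[OF c(1)] c(2) by fastforce
    then show "c \<in> {c. set c \<subseteq> {0..K} \<and> length c \<le> K}" using c(2) by simp
  qed
  moreover have "finite {c. set c \<subseteq> {0..K} \<and> length c \<le> K}" by (rule finite_lists_length_le) simp
  ultimately show ?thesis by (rule finite_subset)
qed

lemma len_le_sum: "(\<forall>c\<in>set cs. 1 \<le> length c) \<Longrightarrow> length cs \<le> sum_list (map length cs)"
  by (induction cs) auto

lemma sum_le_K: "(\<forall>c\<in>set cs. length c \<le> K) \<Longrightarrow> sum_list (map length cs) \<le> K * length cs"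
  by (induction cs) auto

lemma finite_Seq: "finite (Seq K N)"
proof -
  have "Seq K N \<subseteq> {cs. set cs \<subseteq> codesK K \<and> length cs \<le> N}"
  proof
    fix cs assume "cs \<in> Seq K N"
    then have a: "set cs \<subseteq> codesK K" "sum_list (map length cs) = N" unfolding Seq_def by auto
    have "\<forall>c\<in>set cs. 1 \<le> length c" using a(1) code_len unfolding codesK_def by auto
    then have "length cs \<le> N" using len_le_sum a(2) by metis
    then show "cs \<in> {cs. set cs \<subseteq> codesK K \<and> length cs \<le> N}" using a(1) by simp
  qed
  moreover have "finite {cs. set cs \<subseteq> codesK K \<and> length cs \<le> N}"
    by (rule finite_lists_length_le) (rule finite_codesK)
  ultimately show ?thesis by (rule finite_subset)
qed

lemma finite_Cf: "finite (Cf K N)"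
  unfolding Cf_def using finite_Seq by auto

lemma card_Cf: "card (Cf K N) = (\<Sum>cs\<in>Seq K N. length cs - 1)"
  unfolding Cf_def by (subst card_SigmaI) (simp_all add: finite_Seq)

lemma Seq_codes: "cs \<in> Seq K N \<Longrightarrow> \<forall>c\<in>set cs. is_code c"
  unfolding Seq_def codesK_def by auto

lemma enc_len: "p \<in> Cf K N \<Longrightarrow> length (enc p) = Suc N"
proof -
  assume "p \<in> Cf K N"
  then have "sum_list (map length (fst p)) = N" unfolding Cf_def Seq_def by auto
  then show ?thesis by (simp add: enc_def length_concat)
qed

lemma ev_enc_inj: "inj_on (\<lambda>p. evk 0 (enc p)) (Cf K N)"
proof (rule inj_onI)
  fix p q assume p: "p \<in> Cf K N" and q: "q \<in> Cf K N" and e: "evk 0 (enc p) = evk 0 (enc q)"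
  have "enc p = enc q" using ev_inj[OF _ e] enc_len[OF p] enc_len[OF q] by simp
  then have 1: "snd p = snd q" and 2: "concat (fst p) = concat (fst q)" by (simp_all add: enc_def)
  have "fst p = fst q"
    using concat_codes_inj[OF _ _ 2] Seq_codes p q unfolding Cf_def by auto
  then show "p = q" using 1 by (simp add: prod_eq_iff)
qed

definition Sset :: "nat \<Rightarrow> nat \<Rightarrow> (real \<Rightarrow> real) set" where
  "Sset K N = (\<lambda>p. evk 0 (enc p)) ` Cf K N"

lemma card_Sset: "card (Sset K N) = card (Cf K N)"
  unfolding Sset_def by (rule card_image[OF ev_enc_inj])

lemma finite_Sset: "finite (Sset K N)"
  unfolding Sset_def using finite_Cf by simp

lemma Sset_Gen: "Sset K N \<subseteq> Gen"
  unfolding Sset_def using evk_Gen by auto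

lemma x0_step: "x0 \<otimes>\<^bsub>BB\<^esub> evk 0 (a # w) = evk 0 (Suc a # w)"
proof -
  have e: "x0 [^]\<^bsub>BB\<^esub> Suc a = x0 \<otimes>\<^bsub>BB\<^esub> (x0 [^]\<^bsub>BB\<^esub> a)" by (rule BBg.nat_pow_Suc2) simp
  show ?thesis by (simp only: evk.simps X_0 e) (simp add: BBg.m_assoc)
qed

lemma x1_push: "x1 \<otimes>\<^bsub>BB\<^esub> evk 0 (h # w) = evk 0 (h # push h w)"
proof -
  have "x1 \<otimes>\<^bsub>BB\<^esub> evk 0 (h # w) = evk 0 (push 1 (h # w))"
    using push_evk[of 0 1 "h # w"] by (simp add: X_1)
  then show ?thesis by simp
qed

lemma concat_split: "h < length cs \<Longrightarrow> concat cs = concat (take h cs) @ cs ! h @ concat (drop (Suc h) cs)"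
  by (metis append_take_drop_id concat.simps(2) concat_append Cons_nth_drop_Suc)

lemma x1_step:
  assumes p: "(cs, h) \<in> Cf K N" and nt: "cs ! h \<noteq> [0]"
  shows "\<exists>q \<in> Cf K N. x1 \<otimes>\<^bsub>BB\<^esub> evk 0 (enc q) = evk 0 (enc (cs, h))"
proof -
  have cs: "cs \<in> Seq K N" and hl: "h < length cs - 1" using p unfolding Cf_def by auto
  have hl': "h < length cs" using hl by simp
  have codes: "\<forall>c\<in>set cs. is_code c" using Seq_codes[OF cs] .
  have ck: "set cs \<subseteq> codesK K" using cs unfolding Seq_def by auto
  have ch: "is_code (cs ! h)" using codes hl' by simp
  have chK: "length (cs ! h) \<le> K" using ck nth_mem[OF hl'] unfolding codesK_def by auto
  obtain a l where al: "cs ! h = a # l" using ch unfolding is_code_def by (cases "cs ! h") auto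
  have "a \<noteq> 0"
  proof
    assume "a = 0"
    then have "l = []" using ch al code_hd0 by simp
    then show False using nt al \<open>a = 0\<close> by simp
  qed
  then obtain k where k: "a = Suc k" by (cases a) auto
  obtain c1 c2 where c12: "is_code c1" "is_code c2" "Suc k # l = (Suc (hd c1) # tl c1) @ c2"
      "length c1 + length c2 = length (Suc k # l)"
  proof -
    have "is_code (Suc k # l)" using ch al k by simp
    from code_split[OF this] show ?thesis using that by blast
  qed
  define cs' where "cs' = take h cs @ c1 # c2 # drop (Suc h) cs"
  have l1: "length c1 \<ge> 1" "length c2 \<ge> 1" using code_len c12(1,2) by auto
  have "length c1 + length c2 \<le> K" using c12(4) chK al k by simp
  then have c1K: "length c1 \<le> K" "length c2 \<le> K" using l1 by linarith+
  have set': "set cs' \<subseteq> codesK K"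
  proof -
    have "set (take h cs) \<subseteq> codesK K" using order_trans[OF set_take_subset ck] .
    moreover have "set (drop (Suc h) cs) \<subseteq> codesK K" using order_trans[OF set_drop_subset ck] .
    moreover have "c1 \<in> codesK K" "c2 \<in> codesK K" using c12(1,2) c1K unfolding codesK_def by simp_all
    ultimately show ?thesis unfolding cs'_def by auto
  qed
  have sumcs: "sum_list (map length cs) = sum_list (map length (take h cs)) + length (cs ! h) + sum_list (map length (drop (Suc h) cs))"
  proof -
    have "length (concat cs) = length (concat (take h cs)) + length (cs ! h) + length (concat (drop (Suc h) cs))"
      by (subst concat_split[OF hl']) simp
    then show ?thesis by (simp add: length_concat)
  qed
  have sum': "sum_list (map length cs') = N"
  proof -
    have "sum_list (map length cs') = sum_list (map length (take h cs)) + (length c1 + length c2) + sum_list (map length (drop (Suc h) cs))"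
      unfolding cs'_def by simp
    also have "length c1 + length c2 = length (cs ! h)" using c12(4) al k by simp
    also have "sum_list (map length (take h cs)) + length (cs ! h) + sum_list (map length (drop (Suc h) cs)) = sum_list (map length cs)"
      using sumcs by simp
    also have "\<dots> = N" using cs unfolding Seq_def by simp
    finally show ?thesis .
  qed
  have len': "length cs' = Suc (length cs)" unfolding cs'_def using hl' by simp
  have q: "(cs', h) \<in> Cf K N" unfolding Cf_def Seq_def using set' sum' len' hl' by simp
  have ctake: "\<forall>c\<in>set (take h cs). is_code c" using codes set_take_subset[of h cs] by blast
  have lt: "length (take h cs) = h" using hl' by simp
  have cc': "concat cs' = concat (take h cs) @ (c1 @ c2 @ concat (drop (Suc h) cs))" unfolding cs'_def by simp
  have "push h (concat cs') = concat (take h cs) @ push 0 (c1 @ c2 @ concat (drop (Suc h) cs))"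
    unfolding cc' using push_codes[OF ctake, of 0 "c1 @ c2 @ concat (drop (Suc h) cs)"] unfolding lt by simp
  also have "push 0 (c1 @ c2 @ concat (drop (Suc h) cs)) = (Suc (hd c1) # tl c1) @ c2 @ concat (drop (Suc h) cs)"
    using c12(1) unfolding is_code_def by (cases c1) auto
  also have "concat (take h cs) @ (Suc (hd c1) # tl c1) @ c2 @ concat (drop (Suc h) cs) = concat cs"
  proof -
    have "cs ! h = (Suc (hd c1) # tl c1) @ c2" using c12(3) al k by simp
    then show ?thesis using concat_split[OF hl'] by simp
  qed
  finally have pe: "push h (concat cs') = concat cs" .
  have "x1 \<otimes>\<^bsub>BB\<^esub> evk 0 (enc (cs', h)) = evk 0 (enc (cs, h))"
    unfolding enc_def using x1_push pe by simp
  then show ?thesis using q by blast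
qed


lemma fail0_sub: "Sset K N - (\<lambda>g. x0 \<otimes>\<^bsub>BB\<^esub> g) ` Sset K N \<subseteq> (\<lambda>p. evk 0 (enc p)) ` {p \<in> Cf K N. snd p = 0}"
proof
  fix g assume g: "g \<in> Sset K N - (\<lambda>g. x0 \<otimes>\<^bsub>BB\<^esub> g) ` Sset K N"
  then obtain cs h where p: "(cs, h) \<in> Cf K N" and gd: "g = evk 0 (enc (cs, h))"
    unfolding Sset_def by auto
  have "h = 0"
  proof (rule ccontr)
    assume "h \<noteq> 0"
    then obtain h' where hh: "h = Suc h'" by (cases h) auto
    have q: "(cs, h') \<in> Cf K N" using p hh unfolding Cf_def by auto
    have "x0 \<otimes>\<^bsub>BB\<^esub> evk 0 (h' # concat cs) = evk 0 (Suc h' # concat cs)" by (rule x0_step)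
    then have "x0 \<otimes>\<^bsub>BB\<^esub> evk 0 (enc (cs, h')) = g" unfolding gd enc_def hh by simp
    moreover have "evk 0 (enc (cs, h')) \<in> Sset K N" unfolding Sset_def using q by blast
    ultimately show False using g by blast
  qed
  then show "g \<in> (\<lambda>p. evk 0 (enc p)) ` {p \<in> Cf K N. snd p = 0}" using p gd by force
qed

lemma fail0_card: "card (Sset K N - (\<lambda>g. x0 \<otimes>\<^bsub>BB\<^esub> g) ` Sset K N) \<le> AA K N"
proof -
  have "card (Sset K N - (\<lambda>g. x0 \<otimes>\<^bsub>BB\<^esub> g) ` Sset K N) \<le> card ((\<lambda>p. evk 0 (enc p)) ` {p \<in> Cf K N. snd p = 0})"
    by (rule card_mono[OF _ fail0_sub]) (simp add: finite_Cf)
  also have "\<dots> \<le> card {p \<in> Cf K N. snd p = 0}" by (rule card_image_le) (simp add: finite_Cf)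
  also have "\<dots> \<le> card ((\<lambda>cs. (cs, 0::nat)) ` Seq K N)"
    by (rule card_mono) (auto simp: finite_Seq Cf_def)
  also have "\<dots> \<le> AA K N" unfolding AA_def by (rule card_image_le) (simp add: finite_Seq)
  finally show ?thesis .
qed

lemma fail1_sub: "Sset K N - (\<lambda>g. x1 \<otimes>\<^bsub>BB\<^esub> g) ` Sset K N \<subseteq> (\<lambda>p. evk 0 (enc p)) ` {p \<in> Cf K N. fst p ! snd p = [0]}"
proof
  fix g assume g: "g \<in> Sset K N - (\<lambda>g. x1 \<otimes>\<^bsub>BB\<^esub> g) ` Sset K N"
  then obtain cs h where p: "(cs, h) \<in> Cf K N" and gd: "g = evk 0 (enc (cs, h))"
    unfolding Sset_def by auto
  have "cs ! h = [0]"
  proof (rule ccontr)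
    assume "cs ! h \<noteq> [0]"
    from x1_step[OF p this] obtain q where q: "q \<in> Cf K N" "x1 \<otimes>\<^bsub>BB\<^esub> evk 0 (enc q) = g"
      using gd by auto
    moreover have "evk 0 (enc q) \<in> Sset K N" unfolding Sset_def using q by blast
    ultimately show False using g by blast
  qed
  then show "g \<in> (\<lambda>p. evk 0 (enc p)) ` {p \<in> Cf K N. fst p ! snd p = [0]}" using p gd by force
qed

lemma fail1_count: "card {p \<in> Cf K N. fst p ! snd p = [0]} \<le> GG K (N - 1)"
proof -
  define f where "f p = (take (snd p) (fst p) @ drop (Suc (snd p)) (fst p), snd p)" for p :: "nat list list \<times> nat"
  let ?T = "Sigma (Seq K (N - 1)) (\<lambda>cs. {..<length cs})"
  have img: "f ` {p \<in> Cf K N. fst p ! snd p = [0]} \<subseteq> ?T"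
  proof
    fix y assume "y \<in> f ` {p \<in> Cf K N. fst p ! snd p = [0]}"
    then obtain cs h where p: "(cs, h) \<in> Cf K N" "cs ! h = [0]" and y: "y = f (cs, h)" by auto
    have cs: "cs \<in> Seq K N" and hl: "h < length cs - 1" using p unfolding Cf_def by auto
    have hl': "h < length cs" using hl by simp
    have ck: "set cs \<subseteq> codesK K" using cs unfolding Seq_def by auto
    have s1: "set (take h cs @ drop (Suc h) cs) \<subseteq> codesK K"
      using order_trans[OF set_take_subset ck] order_trans[OF set_drop_subset ck] by auto
    have "length (concat cs) = length (concat (take h cs)) + length (cs ! h) + length (concat (drop (Suc h) cs))"
      by (subst concat_split[OF hl']) simp
    then have "sum_list (map length cs) = sum_list (map length (take h cs @ drop (Suc h) cs)) + 1"
      using p(2) by (simp add: length_concat)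
    moreover have "sum_list (map length cs) = N" using cs unfolding Seq_def by simp
    ultimately have s2: "sum_list (map length (take h cs @ drop (Suc h) cs)) = N - 1"
      by linarith
    have s3: "h < length (take h cs @ drop (Suc h) cs)" using hl by simp
    show "y \<in> ?T" unfolding y f_def Seq_def using s1 s2 s3 by simp
  qed
  have inj: "inj_on f {p \<in> Cf K N. fst p ! snd p = [0]}"
  proof (rule inj_onI)
    fix p q assume p: "p \<in> {p \<in> Cf K N. fst p ! snd p = [0]}" and q: "q \<in> {p \<in> Cf K N. fst p ! snd p = [0]}"
      and e: "f p = f q"
    obtain cs h where pp: "p = (cs, h)" by (cases p)
    obtain ds h' where qq: "q = (ds, h')" by (cases q)
    have hh: "h' = h" using e unfolding pp qq f_def by simp
    have hc: "h < length cs" "h < length ds" using p q unfolding pp qq hh Cf_def by auto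
    have z: "cs ! h = [0]" "ds ! h = [0]" using p q unfolding pp qq hh by auto
    have e2: "take h cs @ drop (Suc h) cs = take h ds @ drop (Suc h) ds" using e unfolding pp qq hh f_def by simp
    have lt: "length (take h cs) = length (take h ds)" using hc by simp
    have t: "take h cs = take h ds" and d: "drop (Suc h) cs = drop (Suc h) ds"
      using e2 lt by (simp_all add: append_eq_append_conv)
    have "cs = take h cs @ cs ! h # drop (Suc h) cs" using hc(1) by (simp add: id_take_nth_drop)
    also have "\<dots> = take h ds @ ds ! h # drop (Suc h) ds" using t d z by simp
    also have "\<dots> = ds" using hc(2) by (simp add: id_take_nth_drop[symmetric])
    finally show "p = q" unfolding pp qq hh by simp
  qed
  have "card {p \<in> Cf K N. fst p ! snd p = [0]} = card (f ` {p \<in> Cf K N. fst p ! snd p = [0]})"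
    by (rule card_image[OF inj, symmetric])
  also have "\<dots> \<le> card ?T" by (rule card_mono[OF _ img]) (simp add: finite_Seq)
  also have "\<dots> = GG K (N - 1)" unfolding GG_def by (simp add: finite_Seq)
  finally show ?thesis .
qed

lemma fail1_card: "card (Sset K N - (\<lambda>g. x1 \<otimes>\<^bsub>BB\<^esub> g) ` Sset K N) \<le> GG K (N - 1)"
proof -
  have "card (Sset K N - (\<lambda>g. x1 \<otimes>\<^bsub>BB\<^esub> g) ` Sset K N) \<le> card ((\<lambda>p. evk 0 (enc p)) ` {p \<in> Cf K N. fst p ! snd p = [0]})"
    by (rule card_mono[OF _ fail1_sub]) (simp add: finite_Cf)
  also have "\<dots> \<le> card {p \<in> Cf K N. fst p ! snd p = [0]}" by (rule card_image_le) (simp add: finite_Cf)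
  also have "\<dots> \<le> GG K (N - 1)" by (rule fail1_count)
  finally show ?thesis .
qed


lemma part_bound:
  assumes fin: "finite S" and sub: "S \<subseteq> carrier BB" and s: "s \<in> carrier BB"
  shows "finite {g \<in> carrier BB. (g \<in> S) \<noteq> (s \<otimes>\<^bsub>BB\<^esub> g \<in> S)}"
    and "card {g \<in> carrier BB. (g \<in> S) \<noteq> (s \<otimes>\<^bsub>BB\<^esub> g \<in> S)} \<le> 2 * card (S - (\<lambda>g. s \<otimes>\<^bsub>BB\<^esub> g) ` S)"
proof -
  let ?f = "\<lambda>g. s \<otimes>\<^bsub>BB\<^esub> g"
  let ?P1 = "{g \<in> S. ?f g \<notin> S}"
  let ?P2 = "{g \<in> carrier BB - S. ?f g \<in> S}"
  have injc: "inj_on ?f (carrier BB)" by (rule inj_onI) (use s in auto)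
  have eq: "{g \<in> carrier BB. (g \<in> S) \<noteq> (?f g \<in> S)} = ?P1 \<union> ?P2" using sub by auto
  have f1: "finite ?P1" using fin by simp
  have i2: "?f ` ?P2 \<subseteq> S - ?f ` S"
  proof
    fix y assume "y \<in> ?f ` ?P2"
    then obtain g where g: "g \<in> carrier BB" "g \<notin> S" "?f g \<in> S" "y = ?f g" by auto
    have "y \<notin> ?f ` S"
    proof
      assume "y \<in> ?f ` S"
      then obtain g' where "g' \<in> S" "y = ?f g'" by auto
      then have "g = g'" using g injc sub by (auto dest: inj_onD)
      then show False using g \<open>g' \<in> S\<close> by simp
    qed
    then show "y \<in> S - ?f ` S" using g by simp
  qed
  have inj2: "inj_on ?f ?P2" using inj_on_subset[OF injc] by auto
  have f2: "finite ?P2"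
    using finite_imageD[OF finite_subset[OF i2] inj2] fin by simp
  show "finite {g \<in> carrier BB. (g \<in> S) \<noteq> (?f g \<in> S)}" using eq f1 f2 by simp
  have c2: "card ?P2 \<le> card (S - ?f ` S)"
    using card_inj_on_le[OF inj2 i2] fin by simp
  have "?P1 \<subseteq> carrier BB" using sub by auto
  then have inj1: "inj_on ?f ?P1" by (rule inj_on_subset[OF injc])
  have i1: "?f ` ?P1 \<subseteq> ?f ` S - S" by auto
  have cS: "card (?f ` S) = card S" using card_image inj_on_subset[OF injc sub] by blast
  have "card ?P1 \<le> card (?f ` S - S)" using card_inj_on_le[OF inj1 i1] fin by simp
  also have "card (?f ` S - S) = card (?f ` S) - card (?f ` S \<inter> S)"
    using fin by (simp add: card_Diff_subset_Int)
  also have "\<dots> = card S - card (S \<inter> ?f ` S)" using cS by (simp add: Int_commute)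
  also have "\<dots> = card (S - ?f ` S)" using fin by (simp add: card_Diff_subset_Int)
  finally have c1: "card ?P1 \<le> card (S - ?f ` S)" .
  have "card {g \<in> carrier BB. (g \<in> S) \<noteq> (?f g \<in> S)} \<le> card ?P1 + card ?P2"
    unfolding eq by (rule card_Un_le)
  then show "card {g \<in> carrier BB. (g \<in> S) \<noteq> (?f g \<in> S)} \<le> 2 * card (S - ?f ` S)"
    using c1 c2 by simp
qed

lemma TF_mult: "monoid.mult Thompson_F = monoid.mult BB" by (simp add: Thompson_F_def)
lemma TF_carrier: "carrier Thompson_F = Gen" by (simp add: Thompson_F_def)

lemma x1_car: "x1 \<in> carrier BB" using X_car[of 1] X_1 by simp

lemma boundary_card:
  assumes fin: "finite S" and sub: "S \<subseteq> carrier BB"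
  shows "card (edge_boundary Thompson_F {x0, x1} S) \<le>
     2 * card (S - (\<lambda>g. x0 \<otimes>\<^bsub>BB\<^esub> g) ` S) + 2 * card (S - (\<lambda>g. x1 \<otimes>\<^bsub>BB\<^esub> g) ` S)"
proof -
  let ?B = "\<lambda>s. {g \<in> carrier BB. (g \<in> S) \<noteq> (s \<otimes>\<^bsub>BB\<^esub> g \<in> S)}"
  have "edge_boundary Thompson_F {x0, x1} S \<subseteq> ?B x0 \<times> {x0} \<union> ?B x1 \<times> {x1}"
    unfolding edge_boundary_def using Gen_sub by (auto simp: TF_mult TF_carrier)
  then have "card (edge_boundary Thompson_F {x0, x1} S) \<le> card (?B x0 \<times> {x0} \<union> ?B x1 \<times> {x1})"
    by (rule card_mono[rotated]) (use part_bound(1)[OF fin sub] x1_car in simp)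
  also have "\<dots> \<le> card (?B x0 \<times> {x0}) + card (?B x1 \<times> {x1})" by (rule card_Un_le)
  also have "\<dots> = card (?B x0) + card (?B x1)" by (simp add: card_cartesian_product)
  also have "\<dots> \<le> 2 * card (S - (\<lambda>g. x0 \<otimes>\<^bsub>BB\<^esub> g) ` S) + 2 * card (S - (\<lambda>g. x1 \<otimes>\<^bsub>BB\<^esub> g) ` S)"
    using part_bound(2)[OF fin sub, of x0] part_bound(2)[OF fin sub, of x1] x1_car by simp
  finally show ?thesis .
qed


lemma code0: "is_code [0]" by (simp add: is_code_def)

lemma rep_Seq: "K \<ge> 1 \<Longrightarrow> replicate N [0] \<in> Seq K N"
  unfolding Seq_def codesK_def using code0 by (induction N) auto

lemma GG_ge: "K \<ge> 1 \<Longrightarrow> N \<le> GG K N"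
proof -
  assume K: "K \<ge> 1"
  have "length (replicate N [0::nat]) \<le> GG K N"
    unfolding GG_def by (rule member_le_sum) (auto simp: rep_Seq[OF K] finite_Seq)
  then show ?thesis by simp
qed

lemma N_AA_le: "N * AA K N \<le> K * GG K N"
proof -
  have "N * AA K N = (\<Sum>cs\<in>Seq K N. N)" unfolding AA_def by simp
  also have "\<dots> \<le> (\<Sum>cs\<in>Seq K N. K * length cs)"
  proof (rule sum_mono)
    fix cs assume cs: "cs \<in> Seq K N"
    then have "\<forall>c\<in>set cs. length c \<le> K" unfolding Seq_def codesK_def by auto
    then have "sum_list (map length cs) \<le> K * length cs" by (rule sum_le_K)
    then show "N \<le> K * length cs" using cs unfolding Seq_def by simp
  qed
  also have "\<dots> = K * GG K N" unfolding GG_def by (simp add: sum_distrib_left)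
  finally show ?thesis .
qed

lemma card_Sset_eq: "N \<ge> 1 \<Longrightarrow> card (Sset K N) + AA K N = GG K N"
proof -
  assume N: "N \<ge> 1"
  have ne: "length cs \<ge> 1" if "cs \<in> Seq K N" for cs
    using that N unfolding Seq_def by (cases cs) auto
  have "(\<Sum>cs\<in>Seq K N. length cs) = (\<Sum>cs\<in>Seq K N. (length cs - 1) + 1)"
  proof (rule sum.cong)
    fix cs assume "cs \<in> Seq K N"
    then have "length cs \<ge> 1" by (rule ne)
    then show "length cs = length cs - 1 + 1" by simp
  qed simp
  also have "\<dots> = (\<Sum>cs\<in>Seq K N. length cs - 1) + (\<Sum>cs\<in>Seq K N. 1)" by (rule sum.distrib)
  also have "\<dots> = card (Sset K N) + AA K N" unfolding card_Sset card_Cf AA_def by simp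
  finally show ?thesis unfolding GG_def by simp
qed

lemma sum_len_const: "(\<forall>c\<in>set cs. length c = K) \<Longrightarrow> sum_list (map length cs) = length cs * K"
  by (induction cs) auto

lemma AA_lower: "card (codesE K) ^ j \<le> AA K (j * K)"
proof -
  have "{cs. set cs \<subseteq> codesE K \<and> length cs = j} \<subseteq> Seq K (j * K)"
  proof
    fix cs assume cs: "cs \<in> {cs. set cs \<subseteq> codesE K \<and> length cs = j}"
    then have "\<forall>c\<in>set cs. length c = K" unfolding codesE_def by auto
    then have "sum_list (map length cs) = j * K" using cs sum_len_const by auto
    moreover have "set cs \<subseteq> codesK K" using cs unfolding codesE_def codesK_def by auto
    ultimately show "cs \<in> Seq K (j * K)" unfolding Seq_def by simp
  qed
  then have "card {cs. set cs \<subseteq> codesE K \<and> length cs = j} \<le> AA K (j * K)"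
    unfolding AA_def by (rule card_mono[OF finite_Seq])
  then show ?thesis using card_lists_length_eq[OF finite_codesE] by simp
qed

lemma exists_n: assumes q: "q > (1::real)" shows "\<exists>n\<ge>1. 16 * real n ^ 2 < q ^ n"
proof -
  define x where "x = sqrt q"
  have x1: "1 < norm x" using q unfolding x_def by simp
  have lim: "(\<lambda>n. of_nat n / x ^ n) \<longlonglongrightarrow> 0" by (rule lim_n_over_pown[OF x1])
  have "eventually (\<lambda>n. of_nat n / x ^ n < 1/4) sequentially"
    by (rule order_tendstoD(2)[OF lim]) simp
  then obtain M where M: "\<And>n. n \<ge> M \<Longrightarrow> of_nat n / x ^ n < 1/4"
    unfolding eventually_sequentially by blast
  define n where "n = max M 1"
  have n1: "n \<ge> 1" unfolding n_def by simp
  have "real n / x ^ n < 1/4" using M[of n] unfolding n_def by simp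
  moreover have xp: "x ^ n > 0" using q unfolding x_def by simp
  ultimately have a: "4 * real n < x ^ n" by (simp add: field_simps)
  have "(4 * real n) ^ 2 < (x ^ n) ^ 2"
    using a by (intro power_strict_mono) auto
  moreover have "(x ^ n) ^ 2 = q ^ n"
  proof -
    have "(x ^ n) ^ 2 = (x ^ 2) ^ n" by (metis power_mult mult.commute)
    moreover have "x ^ 2 = q" unfolding x_def using q by simp
    ultimately show ?thesis by simp
  qed
  ultimately have "16 * real n ^ 2 < q ^ n" by (simp add: power_mult_distrib)
  then show ?thesis using n1 by blast
qed

lemma exists_K: assumes nu: "0 < \<nu>" "\<nu> < (4::real)"
  shows "\<exists>K\<ge>1. \<nu> ^ K \<le> real (card (codesE K))"
proof -
  define q where "q = 4 / \<nu>"
  have q1: "q > 1" using nu unfolding q_def by simp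
  obtain n where n: "n \<ge> 1" "16 * real n ^ 2 < q ^ n" using exists_n[OF q1] by blast
  define K where "K = Suc n"
  have cb: "real ((2*n) choose n) \<le> real K * real (card (codesE K))"
    using card_codesE[of n] unfolding K_def by (simp only: of_nat_mult[symmetric] of_nat_le_iff)
  have lb: "4^n / (2 * real n) \<le> real ((2*n) choose n)"
    by (rule central_binomial_lower_bound) (use n in simp)
  have qn: "(4::real) ^ n = q ^ n * \<nu> ^ n" unfolding q_def using nu by (simp add: power_mult_distrib[symmetric])
  have "\<nu> ^ K * (2 * real n * real K) = \<nu> ^ n * (\<nu> * (2 * real n * real (Suc n)))" unfolding K_def by simp
  also have "\<dots> \<le> \<nu> ^ n * (4 * (2 * real n * (2 * real n)))"
  proof (rule mult_left_mono)
    have "real (Suc n) \<le> 2 * real n" using n by simp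
    then have "2 * real n * real (Suc n) \<le> 2 * real n * (2 * real n)" by (intro mult_left_mono) auto
    then show "\<nu> * (2 * real n * real (Suc n)) \<le> 4 * (2 * real n * (2 * real n))"
      using nu n by (intro mult_mono) auto
    show "0 \<le> \<nu> ^ n" using nu by simp
  qed
  also have "\<dots> = \<nu> ^ n * (16 * real n ^ 2)" by (simp add: power2_eq_square)
  also have "\<dots> \<le> \<nu> ^ n * q ^ n" using n nu by (intro mult_left_mono) auto
  also have "\<dots> = 4 ^ n" using qn by simp
  finally have A: "\<nu> ^ K * (2 * real n * real K) \<le> 4 ^ n" .
  have pos: "2 * real n * real K > 0" using n unfolding K_def by simp
  have "\<nu> ^ K \<le> 4 ^ n / (2 * real n * real K)" using A pos by (simp add: field_simps)
  also have "\<dots> = (4 ^ n / (2 * real n)) / real K" by simp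
  also have "\<dots> \<le> real ((2*n) choose n) / real K" using lb unfolding K_def by (intro divide_right_mono) auto
  also have "\<dots> \<le> real (card (codesE K))" using cb pos unfolding K_def by (simp add: field_simps)
  finally show ?thesis unfolding K_def by (intro exI[of _ "Suc n"]) simp
qed


lemma growth_contra:
  fixes G :: "nat \<Rightarrow> real"
  assumes pos: "\<And>n. n \<ge> 1 \<Longrightarrow> G n > 0" and K: "K \<ge> (1::nat)"
    and low: "\<And>j. j \<ge> 1 \<Longrightarrow> b ^ (j * K) \<le> G (j * K)"
    and cb: "c * b > 1" and c: "c > 0" and b: "b > 0"
  shows "\<exists>N\<ge>N0. N \<ge> 1 \<and> G (N - 1) \<le> c * G N"
proof (rule ccontr)
  assume nt: "\<not> (\<exists>N\<ge>N0. N \<ge> 1 \<and> G (N - 1) \<le> c * G N)"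
  have bad0: "c * G N < G (N - 1)" if "N \<ge> N0" "N \<ge> 1" for N
  proof (rule ccontr)
    assume "\<not> c * G N < G (N - 1)"
    then have "G (N - 1) \<le> c * G N" by simp
    then show False using nt that by blast
  qed
  have bad: "G N < G (N - 1) / c" if "N \<ge> N0" "N \<ge> 1" for N
    using bad0[OF that] c by (simp add: field_simps)
  define M where "M = max N0 1"
  have M1: "M \<ge> 1" "M \<ge> N0" unfolding M_def by auto
  have dec: "G (M + t) \<le> G M * (1 / c) ^ t" for t
  proof (induction t)
    case 0 then show ?case by simp
  next
    case (Suc t)
    have "G (M + Suc t) < G (M + t) / c" using bad[of "M + Suc t"] M1 by simp
    also have "\<dots> \<le> G M * (1 / c) ^ t / c" using Suc c by (simp add: divide_right_mono)
    finally show ?case by (simp add: field_simps)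
  qed
  have cb1: "1 < c * b" using cb .
  obtain n where n: "G M * c ^ M < (c * b) ^ n" using real_arch_pow[OF cb1] by blast
  define j where "j = n + M"
  have j1: "j \<ge> 1" unfolding j_def using M1 by simp
  have jj: "j * K \<ge> j" using K by simp
  have jK: "j * K \<ge> M" "j * K \<ge> n" using jj unfolding j_def by linarith+
  define t where "t = j * K - M"
  have tt: "j * K = M + t" unfolding t_def using jK by simp
  have "b ^ (j * K) \<le> G M * (1 / c) ^ t" using low[OF j1] dec[of t] tt by simp
  then have "b ^ (j * K) * c ^ t \<le> G M" using c by (simp add: field_simps)
  then have "b ^ (j * K) * c ^ t * c ^ M \<le> G M * c ^ M" using c by (simp add: mult_right_mono)
  moreover have "b ^ (j * K) * c ^ t * c ^ M = (c * b) ^ (j * K)"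
    using tt by (simp add: power_mult_distrib power_add mult.commute mult.left_commute)
  moreover have "(c * b) ^ n \<le> (c * b) ^ (j * K)" using jK cb1 by (intro power_increasing) auto
  ultimately show False using n by simp
qed


lemma ratio_bound:
  fixes d s a g g1 \<epsilon> \<delta> :: real
  assumes sg: "s + a = g" and ag: "a \<le> \<epsilon> * g" and g1: "g1 \<le> (1/4 + \<epsilon>) * g"
    and dd: "d \<le> 2 * a + 2 * g1" and gp: "g > 0" and e: "0 < \<epsilon>" "\<epsilon> \<le> 1/10" and de: "\<delta> = 10 * \<epsilon>"
  shows "s > 0" "d / s \<le> 1/2 + \<delta>"
proof -
  have eg: "\<epsilon> * g \<le> g / 10" using e gp by (simp add: mult_right_mono)
  have h3: "(1 - \<epsilon>) * g \<le> s" using sg ag by (simp add: algebra_simps)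
  have "(1 - \<epsilon>) * g > 0" using e gp by simp
  then show sp: "s > 0" using h3 by linarith
  have h1: "d \<le> (1/2 + 4 * \<epsilon>) * g" using dd ag g1 by (simp add: algebra_simps)
  have "\<epsilon> * (11/2 - 10 * \<epsilon>) \<ge> 0" using e by (intro mult_nonneg_nonneg) auto
  moreover have "(1/2 + \<delta>) * (1 - \<epsilon>) - (1/2 + 4 * \<epsilon>) = \<epsilon> * (11/2 - 10 * \<epsilon>)"
    unfolding de by (simp add: field_simps)
  ultimately have h2: "1/2 + 4 * \<epsilon> \<le> (1/2 + \<delta>) * (1 - \<epsilon>)" by linarith
  have "d \<le> (1/2 + 4 * \<epsilon>) * g" by (rule h1)
  also have "\<dots> \<le> ((1/2 + \<delta>) * (1 - \<epsilon>)) * g" using h2 gp by (intro mult_right_mono) auto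
  also have "\<dots> = (1/2 + \<delta>) * ((1 - \<epsilon>) * g)" by simp
  also have "\<dots> \<le> (1/2 + \<delta>) * s" using h3 e de by (intro mult_left_mono) auto
  finally show "d / s \<le> 1/2 + \<delta>" using sp by (simp add: divide_le_eq)
qed

theorem proposition5p3p1:
  shows "isoperimetric_constant Thompson_F {x0, x1} \<le> 1 / 2"
proof -
  define Xs where "Xs = {real (card (edge_boundary Thompson_F {x0, x1} S)) / real (card S) | S.
            S \<subseteq> carrier Thompson_F \<and> finite S \<and> S \<noteq> {}}"
  have bdd: "bdd_below Xs" unfolding Xs_def by (rule bdd_belowI[of _ 0]) auto
  have key: "\<exists>x\<in>Xs. x \<le> 1/2 + \<delta>" if \<delta>: "0 < \<delta>" "\<delta> \<le> 1" for \<delta>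
  proof -
    define \<epsilon> where "\<epsilon> = \<delta> / 10"
    have e: "0 < \<epsilon>" "\<epsilon> \<le> 1/10" "\<delta> = 10 * \<epsilon>" using \<delta> unfolding \<epsilon>_def by auto
    define c where "c = 1/4 + \<epsilon>"
    define \<nu> where "\<nu> = (1/c + 4) / 2"
    have c0: "c > 0" "c > 1/4" unfolding c_def using e by auto
    have "1/c > 0" using c0 by simp
    then have "1/c + 4 > 0" by linarith
    then have nu0: "\<nu> > 0" unfolding \<nu>_def by (intro divide_pos_pos) auto
    have "1/c < 4" using c0 by (simp add: field_simps)
    then have nu4: "\<nu> < 4" unfolding \<nu>_def by simp
    have "c * \<nu> = (1 + 4 * c) / 2" unfolding \<nu>_def using c0 by (simp add: field_simps)
    then have cnu: "c * \<nu> > 1" using c0 by simp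
    obtain K where K: "K \<ge> 1" "\<nu> ^ K \<le> real (card (codesE K))" using exists_K[OF nu0 nu4] by blast
    define G where "G n = real (GG K n)" for n
    have pos: "G n > 0" if "n \<ge> 1" for n using GG_ge[OF K(1), of n] that unfolding G_def by simp
    have low: "\<nu> ^ (j * K) \<le> G (j * K)" if j: "j \<ge> 1" for j
    proof -
      have "\<nu> ^ (j * K) = (\<nu> ^ K) ^ j" by (simp add: power_mult mult.commute)
      also have "\<dots> \<le> real (card (codesE K)) ^ j" using K nu0 by (intro power_mono) auto
      also have "\<dots> = real (card (codesE K) ^ j)" by simp
      also have "\<dots> \<le> real (AA K (j * K))" using AA_lower[of K j] by simp
      also have "\<dots> \<le> G (j * K)"
      proof -
        have "j * K \<ge> 1" using j K by simp
        then have "card (Sset K (j * K)) + AA K (j * K) = GG K (j * K)" by (rule card_Sset_eq)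
        then show ?thesis unfolding G_def by simp
      qed
      finally show ?thesis .
    qed
    define N0 where "N0 = nat \<lceil>real K / \<epsilon>\<rceil> + 2"
    obtain N where N: "N \<ge> N0" "N \<ge> 1" "G (N - 1) \<le> c * G N"
      using growth_contra[OF pos K(1) low cnu c0(1) nu0, of N0] by blast
    have KN: "real K \<le> \<epsilon> * real N"
    proof -
      have "real K / \<epsilon> \<le> real N" using N(1) unfolding N0_def by linarith
      then show ?thesis using e by (simp add: field_simps)
    qed
    define S where "S = Sset K N"
    have fin: "finite S" unfolding S_def by (rule finite_Sset)
    have sub: "S \<subseteq> carrier Thompson_F" unfolding S_def TF_carrier by (rule Sset_Gen)
    have subB: "S \<subseteq> carrier BB" using sub Gen_sub TF_carrier by auto
    have sg: "real (card S) + real (AA K N) = G N"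
      using card_Sset_eq[OF N(2), of K] unfolding S_def G_def by (metis of_nat_add)
    have ag: "real (AA K N) \<le> \<epsilon> * G N"
    proof -
      have "real N * real (AA K N) \<le> real K * G N" using N_AA_le[of N K] unfolding G_def
        by (metis of_nat_le_iff of_nat_mult)
      also have "\<dots> \<le> (\<epsilon> * real N) * G N" using KN pos[OF N(2)] by (intro mult_right_mono) auto
      finally have "real N * real (AA K N) \<le> real N * (\<epsilon> * G N)" by (simp add: algebra_simps)
      then show ?thesis using N(2) by simp
    qed
    have dd: "real (card (edge_boundary Thompson_F {x0, x1} S)) \<le> 2 * real (AA K N) + 2 * G (N - 1)"
    proof -
      have "card (edge_boundary Thompson_F {x0, x1} S) \<le>
         2 * card (S - (\<lambda>g. x0 \<otimes>\<^bsub>BB\<^esub> g) ` S) + 2 * card (S - (\<lambda>g. x1 \<otimes>\<^bsub>BB\<^esub> g) ` S)"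
        by (rule boundary_card[OF fin subB])
      also have "\<dots> \<le> 2 * AA K N + 2 * GG K (N - 1)"
        using fail0_card[of K N] fail1_card[of K N] unfolding S_def by simp
      finally have "card (edge_boundary Thompson_F {x0, x1} S) \<le> 2 * AA K N + 2 * GG K (N - 1)" .
      then have "real (card (edge_boundary Thompson_F {x0, x1} S)) \<le> real (2 * AA K N + 2 * GG K (N - 1))"
        by (simp only: of_nat_le_iff)
      then show ?thesis unfolding G_def by simp
    qed
    have rb: "real (card S) > 0" "real (card (edge_boundary Thompson_F {x0, x1} S)) / real (card S) \<le> 1/2 + \<delta>"
      using ratio_bound[OF sg ag _ dd pos[OF N(2)] e] N(3) unfolding c_def by auto
    have "S \<noteq> {}" using rb(1) by auto
    then have "real (card (edge_boundary Thompson_F {x0, x1} S)) / real (card S) \<in> Xs"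
      unfolding Xs_def using fin sub by blast
    then show ?thesis using rb(2) by blast
  qed
  have le: "Inf Xs \<le> 1/2 + \<delta>" if dl: "0 < \<delta>" "\<delta> \<le> 1" for \<delta>
  proof -
    obtain x where "x \<in> Xs" "x \<le> 1/2 + \<delta>" using key[OF dl] by blast
    then show ?thesis using cInf_lower[OF \<open>x \<in> Xs\<close> bdd] by linarith
  qed
  have "Inf Xs \<le> 1/2"
  proof (rule field_le_epsilon)
    fix e :: real assume e: "0 < e"
    have "Inf Xs \<le> 1/2 + min e 1" using le[of "min e 1"] e by simp
    then show "Inf Xs \<le> 1/2 + e" by linarith
  qed
  then show ?thesis unfolding isoperimetric_constant_def Xs_def .
qed

end
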